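(* Let $v$ be a floating-point value (zero or a normal IEEE 754 double) with $\alpha = DP(v) \le 22$ and $\beta = DS(v) \le 15$. Then $v = round(v \otimes 10^{\alpha}) \div 10^{\alpha}$, where the division is performed in IEEE 754 double-precision arithmetic; that is, this floating-point computation introduces no error and recovers exactly the double $v$.
   Context: Convention: a floating-point value $v$ is identified with the decimal number given by its decimal format $DF(v)$, i.e. its shortest decimal representation that reads back to $v$. For a nonzero terminating decimal $x$, $DP(x)$ is the least nonnegative integer $j$ with $x \times 10^j$ an integer, and $DS(x) = DP(x) + \lfloor \log_{10}|x|\rfloor + 1$; $DP(0)=DS(0)=0$. $v \otimes 10^{i}$ and $a \div 10^i$ denote multiplication and division computed in IEEE 754 double-precision arithmetic (round-to-nearest), with $10^i$ represented as a double. $round(\cdot)$ denotes rounding to the nearest integer. *)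

theory Defs
  imports Complex_Main
begin

definition is_double :: "real \<Rightarrow> bool" where
  "is_double x \<longleftrightarrow> (\<exists>m e::int. x = of_int m * 2 powr of_int e \<and>
      \<bar>m\<bar> < 2^53 \<and> -1074 \<le> e \<and> e \<le> 971)"

definition is_normal_double :: "real \<Rightarrow> bool" where
  "is_normal_double x \<longleftrightarrow> is_double x \<and> \<bar>x\<bar> \<ge> 2 powr -1022"

definition round_half_even :: "real \<Rightarrow> int" where
  "round_half_even q =
     (let f = \<lfloor>q\<rfloor> in
      if q - of_int f < 1/2 then f
      else if q - of_int f > 1/2 then f + 1
      else if even f then f else f + 1)"

definition dbl_ulp_exp :: "real \<Rightarrow> int" where
  "dbl_ulp_exp x = max (\<lfloor>log 2 \<bar>x\<bar>\<rfloor> - 52) (-1074)"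

text \<open>Round-to-nearest-even to binary64 precision with unbounded exponent range.\<close>
definition dbl_round :: "real \<Rightarrow> real" where
  "dbl_round x = (if x = 0 then 0 else
     of_int (round_half_even (x / 2 powr of_int (dbl_ulp_exp x))) * 2 powr of_int (dbl_ulp_exp x))"

text \<open>IEEE 754 rounding of an exact real result to a double: None = overflow (infinity).\<close>
definition fl :: "real \<Rightarrow> real option" where
  "fl x = (if \<bar>dbl_round x\<bar> \<ge> 2 ^ 1024 then None else Some (dbl_round x))"

definition is_terminating_decimal :: "real \<Rightarrow> bool" where
  "is_terminating_decimal x \<longleftrightarrow> (\<exists>j::nat. x * 10 ^ j \<in> \<int>)"

definition DP :: "real \<Rightarrow> nat" where
  "DP x = (if x = 0 then 0 else (LEAST j::nat. x * 10 ^ j \<in> \<int>))"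

definition DS :: "real \<Rightarrow> int" where
  "DS x = (if x = 0 then 0 else int (DP x) + \<lfloor>log 10 \<bar>x\<bar>\<rfloor> + 1)"

definition DF :: "real \<Rightarrow> real" where
  "DF v = (SOME x. is_terminating_decimal x \<and> fl x = Some v \<and>
             (\<forall>y. is_terminating_decimal y \<and> fl y = Some v \<longrightarrow> DS x \<le> DS y))"

end

theory Submission
  imports Defs
begin

lemma rhe_int: "round_half_even (of_int k) = k"
  by (simp add: round_half_even_def Let_def)

lemma rhe_err: "\<bar>of_int (round_half_even q) - q\<bar> \<le> 1/2"
proof -
  have a: "of_int \<lfloor>q\<rfloor> \<le> q" "q < of_int \<lfloor>q\<rfloor> + 1" by linarith+
  show ?thesis unfolding round_half_even_def Let_def
    using a by (auto split: if_splits)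
qed

lemma dbl_round_err: "\<bar>dbl_round x - x\<bar> \<le> 2 powr of_int (dbl_ulp_exp x) / 2"
proof (cases "x = 0")
  case True then show ?thesis by (simp add: dbl_round_def)
next
  case False
  define s where "s = (2::real) powr of_int (dbl_ulp_exp x)"
  have s: "s > 0" unfolding s_def by simp
  have "dbl_round x - x = (of_int (round_half_even (x / s)) - x / s) * s"
    using False s by (simp add: dbl_round_def s_def[symmetric] algebra_simps)
  then have "\<bar>dbl_round x - x\<bar> = \<bar>of_int (round_half_even (x / s)) - x / s\<bar> * s"
    using s by (simp add: abs_mult)
  also have "\<dots> \<le> 1/2 * s" using rhe_err s by (intro mult_right_mono) auto
  finally show ?thesis unfolding s_def by simp
qed

lemma ulp_bound:
  assumes "x \<noteq> 0"
  shows "2 powr of_int (dbl_ulp_exp x) \<le> \<bar>x\<bar> / 2^52 + 1 / 2^1074"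
proof -
  have "(2::real) powr of_int (\<lfloor>log 2 \<bar>x\<bar>\<rfloor> - 52) = 2 powr of_int \<lfloor>log 2 \<bar>x\<bar>\<rfloor> / 2 powr 52"
    by (simp add: powr_diff)
  also have "\<dots> \<le> 2 powr (log 2 \<bar>x\<bar>) / 2 powr 52"
    by (intro divide_right_mono powr_mono) auto
  also have "\<dots> = \<bar>x\<bar> / 2^52" using assms by (simp add: powr_realpow)
  finally have 1: "(2::real) powr of_int (\<lfloor>log 2 \<bar>x\<bar>\<rfloor> - 52) \<le> \<bar>x\<bar> / 2^52" .
  have 2: "(2::real) powr of_int (-1074::int) = 1 / 2^1074"
  proof -
    have a: "real_of_int (-1074::int) = - 1074" by simp
    have b: "(2::real) powr 1074 = 2 ^ 1074" by (rule powr_numeral) simp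
    show ?thesis by (simp only: a powr_minus_divide b)
  qed
  show ?thesis
  proof (cases "\<lfloor>log 2 \<bar>x\<bar>\<rfloor> - 52 \<le> -1074")
    case True
    then have "max (\<lfloor>log 2 \<bar>x\<bar>\<rfloor> - 52) (-1074) = -1074" by (rule max_absorb2)
    moreover have "0 \<le> \<bar>x\<bar> / (2::real)^52" by simp
    ultimately show ?thesis using 2 by (simp only: dbl_ulp_exp_def)
  next
    case False
    then have "max (\<lfloor>log 2 \<bar>x\<bar>\<rfloor> - 52) (-1074) = \<lfloor>log 2 \<bar>x\<bar>\<rfloor> - 52" by simp
    moreover have "0 \<le> 1 / (2::real)^1074" by simp
    ultimately show ?thesis using 1 by (simp only: dbl_ulp_exp_def)
  qed
qed

lemma dbl_round_err2: "\<bar>dbl_round x - x\<bar> \<le> \<bar>x\<bar> / 2^53 + 1 / 2^1075"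
proof (cases "x = 0")
  case True then show ?thesis by (simp add: dbl_round_def)
next
  case False
  have "(\<bar>x\<bar> / 2^52 + 1 / 2^1074) / 2 = \<bar>x\<bar> / (2::real)^53 + 1 / 2^1075"
    by (simp only: add_divide_distrib divide_divide_eq_left) simp
  moreover have "\<bar>dbl_round x - x\<bar> \<le> (\<bar>x\<bar> / 2^52 + 1 / 2^1074) / 2"
    by (rule order_trans[OF dbl_round_err divide_right_mono[OF ulp_bound[OF False]]]) simp
  ultimately show ?thesis by simp
qed

lemma dbl_round_exact:
  assumes m: "\<bar>m\<bar> < 2^53" and e: "-1074 \<le> e"
  shows "dbl_round (of_int m * (2::real) powr of_int e) = of_int m * 2 powr of_int e"
proof (cases "m = 0")
  case True then show ?thesis by (simp add: dbl_round_def)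
next
  case False
  define v where "v = (of_int m::real) * 2 powr of_int e"
  have v0: "v \<noteq> 0" using False by (simp add: v_def)
  have "log 2 \<bar>v\<bar> = log 2 \<bar>of_int m\<bar> + of_int e"
    using False by (simp add: v_def abs_mult log_mult)
  moreover have "log 2 \<bar>of_int m\<bar> < 53"
  proof -
    have "\<bar>real_of_int m\<bar> < 2 powr 53" using m
      by (simp add: powr_realpow[symmetric])
    then show ?thesis using False by (simp add: log_less_iff)
  qed
  ultimately have "\<lfloor>log 2 \<bar>v\<bar>\<rfloor> < 53 + e" by (simp add: floor_less_iff)
  then have ue: "dbl_ulp_exp v \<le> e" using e by (simp add: dbl_ulp_exp_def)
  define u where "u = dbl_ulp_exp v"
  have "v / 2 powr of_int u = of_int m * 2 powr of_int (e - u)"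
    by (simp add: v_def powr_diff)
  also have "\<dots> = of_int (m * 2 ^ nat (e - u))"
    using ue u_def by (simp add: powr_realpow[symmetric])
  finally have "v / 2 powr of_int u = of_int (m * 2 ^ nat (e - u))" .
  note K = this
  have "dbl_round v = of_int (round_half_even (v / 2 powr of_int u)) * 2 powr of_int u"
    using v0 by (simp add: dbl_round_def u_def[symmetric])
  also have "\<dots> = of_int (m * 2 ^ nat (e - u)) * 2 powr of_int u"
    by (simp only: K rhe_int)
  finally have "dbl_round v = of_int (m * 2 ^ nat (e - u)) * 2 powr of_int u" .
  also have "\<dots> = v" using K by (simp add: field_simps)
  finally show ?thesis by (simp add: v_def)
qed


lemma fl_some: "\<bar>dbl_round y\<bar> < 2^1024 \<Longrightarrow> fl y = Some (dbl_round y)"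
  by (simp add: fl_def)

lemma DP_int:
  assumes "is_terminating_decimal y"
  shows "y * 10 ^ DP y \<in> \<int>"
proof (cases "y = 0")
  case True then show ?thesis by (simp add: DP_def)
next
  case False
  from assms obtain j where "y * 10 ^ j \<in> \<int>" unfolding is_terminating_decimal_def by blast
  then have "y * 10 ^ (LEAST j::nat. y * 10 ^ j \<in> \<int>) \<in> \<int>" by (rule LeastI)
  then show ?thesis using False by (simp add: DP_def)
qed

lemma DS_nonneg:
  assumes "is_terminating_decimal y"
  shows "DS y \<ge> 0"
proof (cases "y = 0")
  case True then show ?thesis by (simp add: DS_def)
next
  case False
  define d where "d = DP y"
  from DP_int[OF assms] obtain K where K: "y * 10 ^ d = of_int K" unfolding d_def
    by (metis Ints_cases)
  have "K \<noteq> 0" using K False by auto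
  then have "\<bar>of_int K\<bar> \<ge> (1::real)" by linarith
  then have "\<bar>y\<bar> * 10 ^ d \<ge> 1" using K by (metis abs_mult abs_of_nonneg zero_le_power zero_le_numeral)
  then have "\<bar>y\<bar> \<ge> 1 / 10 ^ d" by (simp add: field_simps)
  then have "log 10 \<bar>y\<bar> \<ge> log 10 (1 / 10 ^ d)" using False by (subst log_le_cancel_iff) auto
  moreover have "log 10 (1 / 10 ^ d) = - real d" by (simp add: log_divide log_nat_power)
  ultimately have "log 10 \<bar>y\<bar> \<ge> - real d" by simp
  then have "\<lfloor>log 10 \<bar>y\<bar>\<rfloor> \<ge> - int d" by (simp add: le_floor_iff)
  then show ?thesis using False by (simp add: DS_def d_def)
qed

lemma DS_bound:
  assumes "y \<noteq> 0" "DS y \<le> 15"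
  shows "\<bar>y\<bar> * 10 ^ DP y < 10 ^ 15"
proof -
  define d where "d = DP y"
  have "\<lfloor>log 10 \<bar>y\<bar>\<rfloor> < 15 - int d" using assms by (simp add: DS_def d_def)
  then have "log 10 \<bar>y\<bar> < 15 - real d" by (simp add: floor_less_iff)
  then have "\<bar>y\<bar> < 10 powr (15 - real d)" using assms(1)
  proof -
    have "\<bar>y\<bar> = 10 powr (log 10 \<bar>y\<bar>)" using assms(1) by simp
    also have "\<dots> < 10 powr (15 - real d)" using \<open>log 10 \<bar>y\<bar> < _\<close> by (intro powr_less_mono) auto
    finally show ?thesis .
  qed
  then have "\<bar>y\<bar> * 10 powr real d < 10 powr (15 - real d) * 10 powr real d"
    by (intro mult_strict_right_mono) auto
  also have "\<dots> = 10 powr 15" by (subst powr_add[symmetric]) simp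
  also have "(10::real) powr 15 = 10^15" by (rule powr_numeral) simp
  also have "(10::real) powr real d = 10^d" by (simp add: powr_realpow)
  finally show ?thesis by (simp add: d_def)
qed

lemma double_ok:
  assumes "is_double v"
  shows "is_terminating_decimal v \<and> fl v = Some v"
proof -
  from assms obtain m e where v: "v = of_int m * 2 powr of_int e" and m: "\<bar>m\<bar> < 2^53"
    and e1: "-1074 \<le> e" and e2: "e \<le> 971" unfolding is_double_def by blast
  have r: "dbl_round v = v" using dbl_round_exact[OF m e1] v by simp
  have "\<bar>v\<bar> = \<bar>of_int m\<bar> * 2 powr of_int e" using v by (simp add: abs_mult)
  also have "\<dots> < 2^53 * 2 powr of_int e"
  proof (intro mult_strict_right_mono)
    show "\<bar>real_of_int m\<bar> < 2^53" using m by (metis of_int_abs of_int_less_iff of_int_numeral of_int_power)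
  qed simp
  also have "\<dots> \<le> 2^53 * 2 powr 971"
  proof (intro mult_left_mono powr_mono)
    show "real_of_int e \<le> 971" using e2 by simp
  qed simp_all
  also have "(2::real) powr 971 = 2^971" by (rule powr_numeral) simp
  also have "(2::real)^53 * 2^971 = 2^1024" by (simp flip: power_add)
  finally have "\<bar>v\<bar> < 2^1024" .
  then have fl: "fl v = Some v" using r by (simp add: fl_def)
  have "is_terminating_decimal v"
  proof (cases "e \<ge> 0")
    case True
    have "v * 10 ^ 0 = of_int (m * 2 ^ nat e)" using True v by (simp add: powr_realpow[symmetric])
    then show ?thesis unfolding is_terminating_decimal_def by (metis Ints_of_int)
  next
    case False
    define k where "k = nat (-e)"
    have rk: "real k = - of_int e" using False by (simp add: k_def)
    have p2: "(2::real) ^ k = 2 powr (real k)" by (simp add: powr_realpow)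
    have one: "2 powr of_int e * 2 ^ k = (1::real)"
      unfolding p2 powr_add[symmetric] rk by simp
    have t: "(10::real) ^ k = 2 ^ k * 5 ^ k" by (simp flip: power_mult_distrib)
    have "v * 10 ^ k = of_int m * 5 ^ k * (2 powr of_int e * 2 ^ k)"
      unfolding v t by (simp only: ac_simps)
    then have "v * 10 ^ k = of_int (m * 5 ^ k)" unfolding one by simp
    then show ?thesis unfolding is_terminating_decimal_def by (metis Ints_of_int)
  qed
  then show ?thesis using fl by simp
qed

lemma DF_spec:
  assumes "is_double v"
  shows "is_terminating_decimal (DF v) \<and> fl (DF v) = Some v"
proof -
  let ?P = "\<lambda>y. is_terminating_decimal y \<and> fl y = Some v"
  have "?P v" using double_ok[OF assms] .
  then obtain y0 where y0: "?P y0" and min: "\<forall>y. ?P y \<longrightarrow> nat (DS y0) \<le> nat (DS y)"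
    using ex_has_least_nat[of ?P v "\<lambda>y. nat (DS y)"] by blast
  have "\<forall>y. ?P y \<longrightarrow> DS y0 \<le> DS y"
    using min DS_nonneg y0 by (metis nat_le_eq_zle)
  then have "\<exists>x. ?P x \<and> (\<forall>y. ?P y \<longrightarrow> DS x \<le> DS y)" using y0 by blast
  then have "?P (SOME x. ?P x \<and> (\<forall>y. ?P y \<longrightarrow> DS x \<le> DS y))" by (rule someI2_ex) blast
  then show ?thesis unfolding DF_def by (simp only: conj_assoc)
qed


lemma num1: "(10::real)^15 / 2^53 + 10^22 / 2^1075 \<le> 1/8"
  by simp

lemma num2: "((10::real)^15 + 1/8) / 2^53 + 1 / 2^1075 \<le> 1/8"
  by simp

theorem theorem3:
  fixes v :: real
  assumes "v = 0 \<or> is_normal_double v"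
    and "DP (DF v) \<le> 22"
    and "DS (DF v) \<le> 15"
  shows "\<exists>p w n. fl (10 ^ DP (DF v)) = Some p \<and> fl (v * p) = Some w \<and>
           fl (of_int (round w)) = Some n \<and> fl (n / p) = Some v"
proof -
  have dv: "is_double v"
  proof (cases "v = 0")
    case True
    have "(0::real) = of_int 0 * 2 powr of_int 0" by simp
    then show ?thesis unfolding is_double_def True by fastforce
  next
    case False then show ?thesis using assms(1) by (simp add: is_normal_double_def)
  qed
  define x where "x = DF v"
  define a where "a = DP x"
  have xt: "is_terminating_decimal x" and flx: "fl x = Some v"
    using DF_spec[OF dv] by (simp_all add: x_def)
  have a22: "a \<le> 22" using assms(2) by (simp add: a_def x_def)
  have rx: "dbl_round x = v" using flx by (simp add: fl_def split: if_splits)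
  obtain N where N: "x * 10 ^ a = of_int N"
    using DP_int[OF xt] unfolding a_def by (metis Ints_cases)
  have NR: "\<bar>real_of_int N\<bar> < 10^15"
  proof (cases "x = 0")
    case True then show ?thesis using N by simp
  next
    case False
    have "\<bar>x\<bar> * 10 ^ a < 10 ^ 15" using DS_bound[OF False] assms(3) by (simp add: a_def x_def)
    then show ?thesis using N[symmetric] by (simp add: abs_mult)
  qed
  have NI: "\<bar>N\<bar> < 2^53"
  proof -
    have "\<bar>real_of_int N\<bar> < 2^53" using NR by simp
    then show ?thesis by (metis of_int_abs of_int_less_iff of_int_numeral of_int_power)
  qed
  define p where "p = (10::real) ^ a"
  have p0: "p > 0" by (simp add: p_def)
  have p22: "p \<le> 10^22" unfolding p_def using a22 by (intro power_increasing) auto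
  have p5: "p = of_int (5 ^ a) * 2 powr of_int (int a)"
    by (simp add: p_def powr_realpow flip: power_mult_distrib)
  have five: "\<bar>(5::int) ^ a\<bar> < 2^53"
  proof -
    have "(5::int) ^ a \<le> 5 ^ 22" using a22 by (intro power_increasing) auto
    then show ?thesis by simp
  qed
  have rp: "dbl_round p = p" using dbl_round_exact[OF five, of "int a"] p5 by simp
  have flp: "fl p = Some p" using rp p22 p0 by (simp add: fl_def)
  have xe: "x = of_int N / p" using N p0 by (simp add: p_def field_simps)
  have xN: "\<bar>x\<bar> * p = \<bar>of_int N\<bar>" by (metis N abs_mult abs_of_pos p0 p_def)
  have e1: "\<bar>v - x\<bar> \<le> \<bar>x\<bar> / 2^53 + 1 / 2^1075" using dbl_round_err2[of x] rx by simp
  have "v * p - of_int N = (v - x) * p" using xe p0 by (simp add: field_simps)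
  then have "\<bar>v * p - of_int N\<bar> = \<bar>v - x\<bar> * p" using p0 by (simp add: abs_mult)
  also have "\<dots> \<le> (\<bar>x\<bar> / 2^53 + 1 / 2^1075) * p" using e1 p0 by (intro mult_right_mono) auto
  also have "\<dots> = \<bar>x\<bar> * p / 2^53 + p / 2^1075" by (simp add: field_simps)
  also have "\<dots> = \<bar>of_int N\<bar> / 2^53 + p / 2^1075" using xN by simp
  also have "\<dots> \<le> 10^15 / 2^53 + 10^22 / 2^1075"
    using NR p22 by (intro add_mono divide_right_mono) auto
  also have "\<dots> \<le> 1/8" by (rule num1)
  finally have e2: "\<bar>v * p - of_int N\<bar> \<le> 1/8" .
  have vpb: "\<bar>v * p\<bar> \<le> 10^15 + 1/8" using e2 NR by linarith
  define w where "w = dbl_round (v * p)"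
  have "\<bar>w - v * p\<bar> \<le> \<bar>v * p\<bar> / 2^53 + 1 / 2^1075" using dbl_round_err2 w_def by simp
  also have "\<dots> \<le> (10^15 + 1/8) / 2^53 + 1 / 2^1075" using vpb by (intro add_mono divide_right_mono) auto
  also have "\<dots> \<le> 1/8" by (rule num2)
  finally have e3: "\<bar>w - v * p\<bar> \<le> 1/8" .
  have "\<bar>w\<bar> \<le> 10^15 + 1" using e3 vpb by linarith
  moreover have "(10::real)^15 + 1 < 2^1024" by simp
  ultimately have "\<bar>w\<bar> < 2^1024" by linarith
  then have flw: "fl (v * p) = Some w" by (simp add: fl_def w_def)
  have "\<bar>w - of_int N\<bar> \<le> 1/4" using e2 e3 by linarith
  then have rw: "round w = N" unfolding round_def by (intro floor_unique) linarith+
  have rN: "dbl_round (of_int N) = of_int N" using dbl_round_exact[OF NI, of 0] by simp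
  have flN: "fl (of_int N) = Some (of_int N)" using rN NR by (simp add: fl_def)
  have flq: "fl (of_int N / p) = Some v" using flx xe by simp
  show ?thesis
    using flp flw flN flq rw by (auto simp: p_def a_def x_def)
qed

end
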